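(* Let $m\geq 1$ be an integer. Then \[ \sum_{k=1}^{\infty}\frac{(q^m/z;q)_k}{(zq^{-m};q)_{m}(q;q)_k(1-q^k)^{m}}z^k =-\sum_{1\leq k_m\leq k_{m-1}\leq\cdots\leq k_1}\ \prod_{i=1}^{m}\frac{q^{k_i}}{(1-zq^{k_i-i})(1-q^{k_i})}. \]
   Context: For $N\geq 0$, $(x;q)_N=(1-x)(1-xq)\cdots(1-xq^{N-1})$ (with $(x;q)_0=1$). Here $q,z$ are complex parameters with $|q|<1$ for which the series converge and no denominator vanishes. *)

theory Defs
  imports "HOL-Analysis.Analysis"
begin

definition qpoch :: "complex \<Rightarrow> complex \<Rightarrow> nat \<Rightarrow> complex" where
  "qpoch x q N = (\<Prod>j<N. (1 - x * q ^ j))"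

text \<open>Index set of the multiple sum: tuples (k_1,...,k_m) with 1 <= k_m <= ... <= k_1,
  encoded as functions nat => nat that vanish outside {1..m}.\<close>
definition chain_idx :: "nat \<Rightarrow> (nat \<Rightarrow> nat) set" where
  "chain_idx m = {k. (\<forall>i. i \<notin> {1..m} \<longrightarrow> k i = 0) \<and> 1 \<le> k m \<and>
                      (\<forall>i\<in>{1..<m}. k (Suc i) \<le> k i)}"

end

theory Submission
  imports Defs
begin

definition ch :: "nat \<Rightarrow> nat \<Rightarrow> (nat \<Rightarrow> nat) set" where
  "ch m n = {k. (\<forall>i. i \<notin> {1..m} \<longrightarrow> k i = 0) \<and> (\<forall>i\<in>{1..m}. 1 \<le> k i \<and> k i \<le> n) \<and>
              (\<forall>i\<in>{1..<m}. k (Suc i) \<le> k i)}"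

definition CS :: "nat \<Rightarrow> (nat \<Rightarrow> nat \<Rightarrow> 'a::comm_ring_1) \<Rightarrow> nat \<Rightarrow> 'a" where
  "CS m F n = (\<Sum>k\<in>ch m n. \<Prod>i\<in>{1..m}. F i (k i))"

definition ext :: "nat \<Rightarrow> (nat \<Rightarrow> nat) \<Rightarrow> nat \<Rightarrow> nat" where
  "ext l k i = (if i = 1 then l else k (i - 1))"

definition sh :: "(nat \<Rightarrow> nat) \<Rightarrow> nat \<Rightarrow> nat" where
  "sh k i = (if i = 0 then 0 else k (Suc i))"

lemma ch0: "ch 0 n = {\<lambda>_. 0}"
  unfolding ch_def by auto

lemma ch_bij: "bij_betw (\<lambda>(l, k). ext l k) (SIGMA l:{1..n}. ch m l) (ch (Suc m) n)"
proof (rule bij_betw_byWitness[where f'="\<lambda>k. (k 1, sh k)"])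
  show "\<forall>a\<in>(SIGMA l:{1..n}. ch m l). (\<lambda>k. (k 1, sh k)) ((\<lambda>(l, k). ext l k) a) = a"
  proof (intro ballI)
    fix a assume "a \<in> (SIGMA l:{1..n}. ch m l)"
    then obtain l k where a: "a = (l, k)" "k \<in> ch m l" by auto
    hence "k 0 = 0" unfolding ch_def by auto
    thus "(\<lambda>k. (k 1, sh k)) ((\<lambda>(l, k). ext l k) a) = a"
      using a by (auto simp: ext_def sh_def fun_eq_iff)
  qed
  show "\<forall>a'\<in>ch (Suc m) n. (\<lambda>(l, k). ext l k) ((\<lambda>k. (k 1, sh k)) a') = a'"
  proof (intro ballI)
    fix k assume "k \<in> ch (Suc m) n"
    hence "k 0 = 0" unfolding ch_def by auto
    thus "(\<lambda>(l, k). ext l k) ((\<lambda>k. (k 1, sh k)) k) = k"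
      by (auto simp: ext_def sh_def fun_eq_iff le_Suc_eq)
  qed
  show "(\<lambda>(l, k). ext l k) ` (SIGMA l:{1..n}. ch m l) \<subseteq> ch (Suc m) n"
  proof safe
    fix l k assume l: "l \<in> {1..n}" and k: "k \<in> ch m l"
    have k1: "\<And>i. i \<notin> {1..m} \<Longrightarrow> k i = 0" "\<And>i. i \<in> {1..m} \<Longrightarrow> 1 \<le> k i \<and> k i \<le> l"
      "\<And>i. i \<in> {1..<m} \<Longrightarrow> k (Suc i) \<le> k i" using k unfolding ch_def by auto
    show "ext l k \<in> ch (Suc m) n" unfolding ch_def mem_Collect_eq
    proof (intro conjI allI ballI impI)
      fix i assume i: "i \<notin> {1..Suc m}"
      hence "i - 1 \<notin> {1..m}" by auto
      thus "ext l k i = 0" using k1(1)[of "i - 1"] i by (auto simp: ext_def)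
    next
      fix i assume i: "i \<in> {1..Suc m}"
      have "1 \<le> ext l k i \<and> ext l k i \<le> n"
      proof (cases "i = 1")
        case True thus ?thesis using l by (simp add: ext_def)
      next
        case False hence "i - 1 \<in> {1..m}" using i by auto
        thus ?thesis using k1(2)[of "i - 1"] l False by (auto simp: ext_def)
      qed
      thus "1 \<le> ext l k i" "ext l k i \<le> n" by auto
    next
      fix i assume i: "i \<in> {1..<Suc m}"
      show "ext l k (Suc i) \<le> ext l k i"
      proof (cases "i = 1")
        case True thus ?thesis using k1(2)[of 1] i by (auto simp: ext_def)
      next
        case False
        hence "i - 1 \<in> {1..<m}" "Suc (i - 1) = i" using i by auto
        thus ?thesis using k1(3)[of "i - 1"] False i by (auto simp: ext_def)
      qed
    qed
  qed
  show "(\<lambda>k. (k 1, sh k)) ` ch (Suc m) n \<subseteq> (SIGMA l:{1..n}. ch m l)"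
  proof safe
    fix k assume k: "k \<in> ch (Suc m) n"
    have k1: "\<And>i. i \<notin> {1..Suc m} \<Longrightarrow> k i = 0" "\<And>i. i \<in> {1..Suc m} \<Longrightarrow> 1 \<le> k i \<and> k i \<le> n"
      "\<And>i. i \<in> {1..<Suc m} \<Longrightarrow> k (Suc i) \<le> k i" using k unfolding ch_def by auto
    have mono0: "j \<le> Suc m \<longrightarrow> k j \<le> k i" if "1 \<le> i" "i \<le> j" for i j
      using that(2)
    proof (induction j rule: dec_induct)
      case base show ?case by simp
    next
      case (step j)
      show ?case
      proof
        assume "Suc j \<le> Suc m"
        hence "j \<in> {1..<Suc m}" "j \<le> Suc m" using step(1) that(1) by auto
        thus "k (Suc j) \<le> k i" using k1(3)[of j] step(3) by force
      qed
    qed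
    have mono: "k j \<le> k i" if "1 \<le> i" "i \<le> j" "j \<le> Suc m" for i j
      using mono0[OF that(1,2)] that(3) by blast
    show "k 1 \<in> {1..n}" using k1(2)[of 1] by auto
    show "sh k \<in> ch m (k 1)" unfolding ch_def mem_Collect_eq
    proof (intro conjI allI ballI impI)
      fix i assume "i \<notin> {1..m}" thus "sh k i = 0" using k1(1)[of "Suc i"] by (auto simp: sh_def)
    next
      fix i assume i: "i \<in> {1..m}"
      show "1 \<le> sh k i" using k1(2)[of "Suc i"] i by (auto simp: sh_def)
      show "sh k i \<le> k 1" using mono[of 1 "Suc i"] i by (auto simp: sh_def)
    next
      fix i assume i: "i \<in> {1..<m}"
      show "sh k (Suc i) \<le> sh k i" using k1(3)[of "Suc i"] i by (auto simp: sh_def)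
    qed
  qed
qed

lemma ch_finite: "finite (ch m n)"
proof (induction m arbitrary: n)
  case 0 show ?case by (simp add: ch0)
next
  case (Suc m)
  have "finite ((\<lambda>(l, k). ext l k) ` (SIGMA l:{1..n}. ch m l))"
    using Suc by (intro finite_imageI finite_SigmaI) auto
  thus ?case using ch_bij[of n m] by (simp add: bij_betw_def)
qed

lemma CS0: "CS 0 F n = 1"
  unfolding CS_def ch0 by simp

lemma CS_Suc: "CS (Suc m) F n = (\<Sum>l\<in>{1..n}. F 1 l * CS m (\<lambda>i. F (Suc i)) l)"
proof -
  have pe: "(\<Prod>i\<in>{1..Suc m}. F i (ext l k i)) = F 1 l * (\<Prod>i\<in>{1..m}. F (Suc i) (k i))" for l k
  proof -
    have "{1..Suc m} = insert 1 {Suc 1..Suc m}" by auto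
    hence "(\<Prod>i\<in>{1..Suc m}. F i (ext l k i)) = F 1 (ext l k 1) * (\<Prod>i\<in>{Suc 1..Suc m}. F i (ext l k i))"
      by simp
    also have "(\<Prod>i\<in>{Suc 1..Suc m}. F i (ext l k i)) = (\<Prod>i\<in>{1..m}. F (Suc i) (ext l k (Suc i)))"
      by (rule prod.shift_bounds_cl_Suc_ivl)
    finally show ?thesis by (simp add: ext_def)
  qed
  have "CS (Suc m) F n = (\<Sum>x\<in>(SIGMA l:{1..n}. ch m l). \<Prod>i\<in>{1..Suc m}. F i ((\<lambda>(l, k). ext l k) x i))"
    unfolding CS_def by (rule sum.reindex_bij_betw[OF ch_bij, symmetric])
  also have "\<dots> = (\<Sum>l\<in>{1..n}. \<Sum>k\<in>ch m l. \<Prod>i\<in>{1..Suc m}. F i (ext l k i))"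
    by (subst sum.Sigma) (auto simp: ch_finite split_def)
  also have "\<dots> = (\<Sum>l\<in>{1..n}. F 1 l * CS m (\<lambda>i. F (Suc i)) l)"
    unfolding pe CS_def by (simp add: sum_distrib_left)
  finally show ?thesis .
qed


lemma chain_mono:
  fixes k :: "nat \<Rightarrow> nat"
  assumes "\<forall>i\<in>{1..<m}. k (Suc i) \<le> k i" "1 \<le> a" "a \<le> b" "b \<le> m"
  shows "k b \<le> k a"
proof -
  have "a + d \<le> m \<longrightarrow> k (a + d) \<le> k a" for d
  proof (induction d)
    case 0 show ?case by simp
  next
    case (Suc d)
    show ?case
    proof
      assume "a + Suc d \<le> m"
      hence "a + d \<in> {1..<m}" "a + d \<le> m" using assms(2) by auto
      thus "k (a + Suc d) \<le> k a" using assms(1) Suc by force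
    qed
  qed
  from this[of "b - a"] show ?thesis using assms(3,4) by simp
qed

lemma ch_sub: "1 \<le> m \<Longrightarrow> ch m n \<subseteq> chain_idx m"
  unfolding ch_def chain_idx_def by auto

lemma ch_in:
  assumes "k \<in> chain_idx m"
  shows "k \<in> ch m (k 1)"
proof -
  have k: "\<forall>i. i \<notin> {1..m} \<longrightarrow> k i = 0" "1 \<le> k m" "\<forall>i\<in>{1..<m}. k (Suc i) \<le> k i"
    using assms unfolding chain_idx_def by auto
  have m: "1 \<le> m" using k(1,2) by (cases m) auto
  show ?thesis unfolding ch_def mem_Collect_eq
  proof (intro conjI ballI allI impI)
    fix i assume i: "i \<in> {1..m}"
    show "1 \<le> k i" using chain_mono[OF k(3), of i m] i k(2) by auto
    show "k i \<le> k 1" using chain_mono[OF k(3), of 1 i] i by auto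
  qed (use k in auto)
qed

lemma ch_mono: "n \<le> n' \<Longrightarrow> ch m n \<subseteq> ch m n'"
  unfolding ch_def by auto

lemma ch_filterlim:
  assumes "1 \<le> m"
  shows "filterlim (\<lambda>n. ch m n) (finite_subsets_at_top (chain_idx m)) sequentially"
  unfolding filterlim_finite_subsets_at_top
proof (intro allI impI)
  fix X assume X: "finite X \<and> X \<subseteq> chain_idx m"
  define N where "N = Max ((\<lambda>k. k 1) ` X)"
  have Xs: "X \<subseteq> ch m n" if "N \<le> n" for n
  proof
    fix k assume "k \<in> X"
    hence "k 1 \<le> N" "k \<in> chain_idx m" using X unfolding N_def by auto
    thus "k \<in> ch m n" using ch_in ch_mono[of "k 1" n m] that by auto
  qed
  thus "eventually (\<lambda>n. finite (ch m n) \<and> X \<subseteq> ch m n \<and> ch m n \<subseteq> chain_idx m) sequentially"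
  proof -
    have "eventually (\<lambda>n. N \<le> n) sequentially" by (rule eventually_ge_at_top)
    thus ?thesis by (rule eventually_mono) (use Xs ch_finite ch_sub[OF assms] in auto)
  qed
qed

lemma CS_bound:
  fixes G :: "nat \<Rightarrow> nat \<Rightarrow> real"
  assumes "\<forall>i\<in>{1..m}. \<forall>l\<ge>1. 0 \<le> G i l \<and> G i l \<le> h l" "summable h" "\<forall>l. 0 \<le> h l"
  shows "0 \<le> CS m G n \<and> CS m G n \<le> (suminf h) ^ m"
  using assms(1)
proof (induction m arbitrary: G n)
  case 0 thus ?case by (simp add: CS0)
next
  case (Suc m)
  have IH: "0 \<le> CS m (\<lambda>i. G (Suc i)) l \<and> CS m (\<lambda>i. G (Suc i)) l \<le> (suminf h) ^ m" for l
    by (rule Suc.IH) (use Suc.prems in auto)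
  have G1: "0 \<le> G 1 l \<and> G 1 l \<le> h l" if "1 \<le> l" for l using Suc.prems that by auto
  have S0: "0 \<le> suminf h" using suminf_nonneg[OF assms(2)] assms(3) by auto
  have "0 \<le> (\<Sum>l\<in>{1..n}. G 1 l * CS m (\<lambda>i. G (Suc i)) l)"
    using IH G1 by (intro sum_nonneg) auto
  moreover have "(\<Sum>l\<in>{1..n}. G 1 l * CS m (\<lambda>i. G (Suc i)) l) \<le> (\<Sum>l\<in>{1..n}. h l * (suminf h) ^ m)"
    using IH G1 assms(3) by (intro sum_mono mult_mono) auto
  moreover have "(\<Sum>l\<in>{1..n}. h l * (suminf h) ^ m) \<le> suminf h * (suminf h) ^ m"
    unfolding sum_distrib_right[symmetric]
    by (rule mult_right_mono[OF sum_le_suminf[OF assms(2)]]) (use assms(3) S0 in auto)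
  ultimately show ?case unfolding CS_Suc by simp
qed

lemma geo_sum_le: fixes r :: real assumes "0 \<le> r" "r < 1" shows "(\<Sum>j<K. r ^ j) \<le> 1 / (1 - r)"
proof -
  have "(\<Sum>j<K. r ^ j) = (1 - r ^ K) / (1 - r)" using assms by (simp add: sum_gp_strict)
  also have "\<dots> \<le> 1 / (1 - r)" using assms by (intro divide_right_mono) auto
  finally show ?thesis .
qed

lemma prod_up:
  fixes y :: "nat \<Rightarrow> real"
  assumes "\<And>j. j < K \<Longrightarrow> 0 \<le> y j \<and> y j \<le> r ^ j" "0 \<le> r" "r < 1"
  shows "(\<Prod>j<K. 1 + y j) \<le> exp (1 / (1 - r))"
proof -
  have "(\<Prod>j<K. 1 + y j) \<le> (\<Prod>j<K. exp (y j))"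
    by (rule prod_mono) (use assms(1) in \<open>auto intro: exp_ge_add_one_self\<close>)
  also have "\<dots> = exp (\<Sum>j<K. y j)" by (simp add: exp_sum)
  also have "(\<Sum>j<K. y j) \<le> (\<Sum>j<K. r ^ j)" by (rule sum_mono) (use assms(1) in auto)
  hence "exp (\<Sum>j<K. y j) \<le> exp (1 / (1 - r))" using geo_sum_le[OF assms(2,3), of K] by simp
  finally show ?thesis .
qed

lemma one_minus_ge_exp:
  fixes x c :: real
  assumes "0 \<le> x" "x < 1" "x / (1 - x) \<le> c"
  shows "exp (- c) \<le> 1 - x"
proof -
  have "1 + x / (1 - x) \<le> exp (x / (1 - x))" by (rule exp_ge_add_one_self)
  hence "1 / (1 - x) \<le> exp (x / (1 - x))" using assms by (simp add: field_simps)
  hence "inverse (exp (x / (1 - x))) \<le> 1 - x" using assms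
    by (simp add: field_simps)
  hence "exp (- (x / (1 - x))) \<le> 1 - x" by (simp add: exp_minus)
  moreover have "exp (- c) \<le> exp (- (x / (1 - x)))" using assms(3) by simp
  ultimately show ?thesis by linarith
qed

lemma prod_low:
  fixes x :: "nat \<Rightarrow> real"
  assumes "\<And>j. j < K \<Longrightarrow> 0 \<le> x j \<and> x j \<le> s * r ^ j" "0 \<le> s" "s < 1" "0 \<le> r" "r < 1"
  shows "exp (- (s / ((1 - s) * (1 - r)))) \<le> (\<Prod>j<K. 1 - x j)"
proof -
  have rj: "r ^ j \<le> 1" for j using assms(4,5) by (simp add: power_le_one)
  have each: "exp (- (s * r ^ j / (1 - s))) \<le> 1 - x j" if "j < K" for j
  proof (rule one_minus_ge_exp)
    have xs: "x j \<le> s" using assms(1)[OF that] rj[of j] assms(2) mult_left_le[of "r ^ j" s] by linarith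
    show "0 \<le> x j" using assms(1)[OF that] by simp
    show "x j < 1" using xs assms(3) by simp
    show "x j / (1 - x j) \<le> s * r ^ j / (1 - s)"
      by (rule frac_le) (use assms(1)[OF that] xs assms(3) in auto)
  qed
  have "exp (- (s / ((1 - s) * (1 - r)))) \<le> exp (- (\<Sum>j<K. s * r ^ j / (1 - s)))"
  proof -
    have "(\<Sum>j<K. s * r ^ j / (1 - s)) = s / (1 - s) * (\<Sum>j<K. r ^ j)"
      by (simp add: sum_distrib_left sum_divide_distrib)
    also have "\<dots> \<le> s / (1 - s) * (1 / (1 - r))"
      by (rule mult_left_mono[OF geo_sum_le[OF assms(4,5)]]) (use assms in auto)
    finally show ?thesis by simp
  qed
  also have "\<dots> = (\<Prod>j<K. exp (- (s * r ^ j / (1 - s))))"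
    by (simp add: exp_sum[symmetric] sum_negf)
  also have "\<dots> \<le> (\<Prod>j<K. 1 - x j)"
    by (rule prod_mono) (use each in auto)
  finally show ?thesis .
qed


lemma qpoch_Suc: "qpoch x q (Suc k) = qpoch x q k * (1 - x * q ^ k)"
  by (simp add: qpoch_def)
lemma qpoch_Suc': "qpoch x q (Suc k) = (1 - x) * qpoch (x * q) q k"
  unfolding qpoch_def by (subst prod.lessThan_Suc_shift) (simp add: mult.assoc)
lemma qpoch_0[simp]: "qpoch x q 0 = 1" by (simp add: qpoch_def)

lemma frac_split: "(a::complex) * x / (d * e) = a / d * (x / e)" by simp

lemma alg1: fixes a c u t r Z x e :: complex
  assumes "u \<noteq> 0" "Z \<noteq> 0" "e \<noteq> 0"
  shows "a*c/u^Suc m * (u*t*r/Z*(x/e)) = a*r/Z*t*(c*x/(u^m*e))"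
  using assms by (simp add: field_simps)

lemma alg2: fixes a A u t b X P :: complex
  assumes "u \<noteq> 0" "A \<noteq> 0" "t \<noteq> 0" "P \<noteq> 0"
  shows "a / (A * u) * t * (b * X / (u ^ m * (t * P))) = a * b * X / (u ^ Suc m * (P * A))"
  using assms by (simp add: field_simps)
lemma gen: "-(a::complex)/D - (-b/D) = -(a - b)/D" by (simp add: diff_divide_distrib)

lemma gen2: "(t::complex) \<noteq> 0 \<Longrightarrow> D \<noteq> 0 \<Longrightarrow> -(F*t*S)/(D*t) = F*(-S/D)"
  by (simp add: field_simps)

lemma alg3: fixes y5 y6 y0 y1 y7 y8 y9 y2 y10 y3 y4 y11 :: complex
  assumes "y10  *  y1 = y11  *  y2" "y1 \<noteq> 0" "y2 \<noteq> 0" "y9 \<noteq> 0" "y4 \<noteq> 0" "y3 \<noteq> 0"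
  shows "(y5-1) * y6 * y0 * (y1 * y7 * y8/(y9 * y2) * (y10/(y3 * y4))) = (y5-1) * (y6 * y8)/(y9 * y4) * y7 * (y0 * y11/y3)"
proof -
  have y10: "y10 = y11  *  y2 / y1" using assms(1,2) by (simp add: field_simps)
  show ?thesis unfolding y10 using assms(2-6) by (simp add: field_simps)
qed
lemma alg4: fixes y4 y5 y0 y6 y1 y7 y2 y8 y3 :: complex
  assumes "y3  *  y2 = y8  *  y1" "y7 \<noteq> 0" "y2 \<noteq> 0" "y8 \<noteq> 0" "y1 \<noteq> 0"
  shows "(y4-1) * y5 * y0 * y6/(y1 * y7) = (y4-1) * y5/(y7 * y2) * y8 * (y0 * y6/y3)"
proof -
  have X: "y3 = y8  *  y1 / y2" using assms(1,3) by (simp add: field_simps)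
  show ?thesis unfolding X using assms(2-5) by (simp add: field_simps)
qed

lemma br: fixes a b w q :: complex
  assumes "1 - w*a*b \<noteq> 0" "1 - a*b*q \<noteq> 0" "q \<noteq> 0"
  shows "(1-w*a)/(1-w*a*b) - (1-a*q)/(1-a*b*q) = (1-b)*(1-w/q)*(a*q)/((1-w*a*b)*(1-a*b*q))"
proof -
  have e: "(1-b)*(1-w/q)*(a*q) = (1-b)*(q-w)*a" using assms(3) by (simp add: field_simps)
  show ?thesis unfolding e diff_frac_eq[OF assms(1,2)]
    by (rule arg_cong[where f="\<lambda>x. x / _"]) algebra
qed

locale qctx =
  fixes q :: complex
  assumes q0: "q \<noteq> 0" and qn: "norm q < 1"
begin

lemma one_minus_qpow: "k \<ge> 1 \<Longrightarrow> 1 - q ^ k \<noteq> 0"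
proof
  assume "k \<ge> 1" "1 - q ^ k = 0"
  hence "norm (q ^ k) = 1" by (metis norm_one right_minus_eq)
  moreover have "norm (q ^ k) < 1" using \<open>k\<ge>1\<close> qn
    by (simp add: norm_power power_less_one_iff norm_ge_zero)
  ultimately show False by simp
qed

lemma qpoch_nz: "(\<And>j. j < k \<Longrightarrow> 1 - x * q ^ j \<noteq> 0) \<Longrightarrow> qpoch x q k \<noteq> 0"
  unfolding qpoch_def by (simp add: prod_zero_iff)

lemma qpochq_nz: "qpoch q q k \<noteq> 0"
  by (rule qpoch_nz) (metis one_minus_qpow power_Suc le_add1 plus_1_eq_Suc)

definition Good :: "complex \<Rightarrow> bool" where "Good w = (\<forall>j. 1 - w * q ^ j \<noteq> 0)"

lemma Good_qpoch: "Good w \<Longrightarrow> qpoch (w * q ^ d) q k \<noteq> 0"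
  by (rule qpoch_nz) (simp add: Good_def mult.assoc power_add[symmetric])

definition qb :: "nat \<Rightarrow> nat \<Rightarrow> complex" where
  "qb n k = qpoch (q ^ (n + 1 - k)) q k / qpoch q q k"

lemma TW:
  assumes "k \<le> n" "Good w"
  shows "qb (Suc n) k / qpoch (w * q ^ (Suc n - k)) q k - qb n k / qpoch (w * q ^ (n - k)) q k
    = (1 - q ^ k) * (1 - w / q) * q ^ (Suc n - k) / ((1 - w * q ^ n) * (1 - q ^ Suc n))
       * (qb (Suc n) k / qpoch (w * q ^ (n - k)) q k)"
proof -
  define d where "d = n - k"
  have n: "n = d + k" using assms(1) unfolding d_def by simp
  define E where "E = qpoch (w * q ^ d) q k"
  define E' where "E' = qpoch (w * q ^ Suc d) q k"
  define X where "X = qpoch (q ^ (d + 2)) q k"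
  define Y where "Y = qpoch (q ^ (d + 1)) q k"
  define Qk where "Qk = qpoch q q k"
  have 1: "E' * (1 - w * q ^ d) = E * (1 - w * q ^ (d + k))"
    using qpoch_Suc[of "w * q ^ d" q k] qpoch_Suc'[of "w * q ^ d" q k]
    unfolding E_def E'_def by (simp add: mult.assoc power_add mult_ac)
  have 2: "X * (1 - q ^ (d + 1)) = Y * (1 - q ^ (d + k + 1))"
    using qpoch_Suc[of "q ^ (d+1)" q k] qpoch_Suc'[of "q ^ (d+1)" q k]
    unfolding X_def Y_def by (simp add: mult.assoc power_add mult_ac)
  have gw: "1 - w * q ^ j \<noteq> 0" for j using assms(2) by (simp add: Good_def)
  have Enz: "E \<noteq> 0" "E' \<noteq> 0" unfolding E_def E'_def by (rule Good_qpoch[OF assms(2)])+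
  have Qnz: "Qk \<noteq> 0" unfolding Qk_def by (rule qpochq_nz)
  have a1: "1 - q ^ (d + 1) \<noteq> 0" "1 - q ^ (d + k + 1) \<noteq> 0" by (rule one_minus_qpow, simp)+
  have E'eq: "E' = E * (1 - w * q ^ (d + k)) / (1 - w * q ^ d)" using 1 gw[of d]
    by (simp add: field_simps)
  have Yeq: "Y = X * (1 - q ^ (d + 1)) / (1 - q ^ (d + k + 1))" using 2 a1
    by (simp add: field_simps)
  have lhs: "qb (Suc n) k / qpoch (w * q ^ (Suc n - k)) q k - qb n k / qpoch (w * q ^ (n - k)) q k
     = X / Qk / E' - Y / Qk / E"
    unfolding qb_def n X_def Y_def Qk_def E_def E'_def
    by (simp add: Suc_diff_le numeral_2_eq_2)
  have rhs: "(1 - q ^ k) * (1 - w / q) * q ^ (Suc n - k) / ((1 - w * q ^ n) * (1 - q ^ Suc n))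
       * (qb (Suc n) k / qpoch (w * q ^ (n - k)) q k)
     = (1 - q ^ k) * (1 - w / q) * q ^ (d + 1) / ((1 - w * q ^ (d + k)) * (1 - q ^ (d + k + 1)))
       * (X / Qk / E)"
    unfolding qb_def n X_def Y_def Qk_def E_def
    by (simp add: Suc_diff_le numeral_2_eq_2)
  have gd: "1 - w * q ^ (d + k) \<noteq> 0" "1 - w * q ^ d \<noteq> 0" using gw by auto
  define a where "a = q ^ d"
  define b where "b = q ^ k"
  have pw: "q ^ (d + k) = a * b" "q ^ (d + 1) = a * q" "q ^ (d + k + 1) = a * b * q"
    unfolding a_def b_def by (simp_all add: power_add mult_ac)
  have nz1: "1 - w * a * b \<noteq> 0" "1 - a * b * q \<noteq> 0" "1 - w * a \<noteq> 0"
    using gd(1)[unfolded pw] a1(2)[unfolded pw] gd(2) by (simp_all add: a_def mult.assoc)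
  have L1: "X / Qk / E' = X / (Qk * E) * ((1 - w * a) / (1 - w * a * b))"
    unfolding E'eq pw using Enz Qnz nz1 by (simp add: a_def mult.assoc)
  have L2: "Y / Qk / E = X / (Qk * E) * ((1 - a * q) / (1 - a * b * q))"
    unfolding Yeq pw by simp
  have "qb (Suc n) k / qpoch (w * q ^ (Suc n - k)) q k - qb n k / qpoch (w * q ^ (n - k)) q k
     = X / Qk / E' - Y / Qk / E" by (rule lhs)
  also have "\<dots> = X / (Qk * E) * ((1 - w * a) / (1 - w * a * b) - (1 - a * q) / (1 - a * b * q))"
    unfolding L1 L2 by (simp add: right_diff_distrib)
  also have "\<dots> = X / (Qk * E) * ((1-b)*(1-w/q)*(a*q)/((1-w*a*b)*(1-a*b*q)))"
    using br[OF nz1(1,2) q0] by simp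
  also have "\<dots> = (1 - q ^ k) * (1 - w / q) * q ^ (d + 1) / ((1 - w * q ^ (d + k)) * (1 - q ^ (d + k + 1)))
       * (X / Qk / E)" unfolding pw b_def by (simp add: mult_ac)
  also have "\<dots> = (1 - q ^ k) * (1 - w / q) * q ^ (Suc n - k) / ((1 - w * q ^ n) * (1 - q ^ Suc n))
       * (qb (Suc n) k / qpoch (w * q ^ (n - k)) q k)" by (rule rhs[symmetric])
  finally show ?thesis .
qed


definition B :: "nat \<Rightarrow> complex \<Rightarrow> nat \<Rightarrow> complex" where
  "B m w k = (\<Prod>j<k. w - q ^ (m + j))"

definition Tm :: "nat \<Rightarrow> complex \<Rightarrow> nat \<Rightarrow> nat \<Rightarrow> complex" where
  "Tm m w n k = B m w k * qb n k / ((1 - q ^ k) ^ m * qpoch (w * q ^ (n - k)) q k)"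

definition Dm :: "nat \<Rightarrow> complex \<Rightarrow> complex" where
  "Dm m w = qpoch (w * q powi (- int m)) q m"

definition P :: "nat \<Rightarrow> complex \<Rightarrow> nat \<Rightarrow> complex" where
  "P m w n = - (\<Sum>k\<in>{1..n}. Tm m w n k) / Dm m w"

definition Fz :: "complex \<Rightarrow> nat \<Rightarrow> nat \<Rightarrow> complex" where
  "Fz w i l = q ^ l / ((1 - w * q powi (int l - int i)) * (1 - q ^ l))"

lemma Fz1: "Fz w 1 (Suc n) = q ^ Suc n / ((1 - w * q ^ n) * (1 - q ^ Suc n))"
  unfolding Fz_def by simp

lemma B_Suc_shift: "B (Suc m) w k = q ^ k * B m (w / q) k"
proof -
  have "B (Suc m) w k = (\<Prod>j<k. q * (w / q - q ^ (m + j)))"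
    unfolding B_def by (rule prod.cong) (use q0 in \<open>auto simp: field_simps\<close>)
  also have "\<dots> = q ^ k * B m (w / q) k" unfolding B_def by (simp add: prod.distrib)
  finally show ?thesis .
qed

lemma Dm_Suc: "Dm (Suc m) w = Dm m (w / q) * (1 - w / q)"
proof -
  have p1: "q powi (- int (Suc m)) = inverse (q ^ Suc m)" by (metis power_int_minus power_int_of_nat)
  have p2: "q powi (- int m) = inverse (q ^ m)" by (metis power_int_minus power_int_of_nat)
  have e1: "w * q powi (- int (Suc m)) = w / q * q powi (- int m)"
    unfolding p1 p2 using q0 by (simp add: field_simps)
  have e2: "w * q powi (- int (Suc m)) * q ^ m = w / q"
    unfolding p1 using q0 by (simp add: field_simps)
  show ?thesis unfolding Dm_def qpoch_Suc e2 unfolding e1 ..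
qed

lemma Tm_step:
  assumes "1 \<le> k" "k \<le> n" "Good w"
  shows "Tm (Suc m) w (Suc n) k - Tm (Suc m) w n k = Fz w 1 (Suc n) * (1 - w / q) * Tm m (w / q) (Suc n) k"
proof -
  define c where "c = B m (w / q) k"
  define G where "G = qb (Suc n) k / qpoch (w * q ^ (n - k)) q k"
  define u where "u = 1 - q ^ k"
  have u0: "u \<noteq> 0" unfolding u_def using assms(1) by (rule one_minus_qpow)
  have ww: "w / q * q ^ (Suc n - k) = w * q ^ (n - k)"
    using q0 assms(2) by (simp add: Suc_diff_le)
  have Znz: "(1 - w * q ^ n) * (1 - q ^ Suc n) \<noteq> 0"
    using assms(3) one_minus_qpow[of "Suc n"] unfolding Good_def by simp
  have Enz: "qpoch (w * q ^ (n - k)) q k \<noteq> 0" by (rule Good_qpoch[OF assms(3)])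
  have pq: "q ^ Suc n = q ^ k * q ^ (Suc n - k)"
    using assms(2) by (simp add: power_add[symmetric])
  have "Tm (Suc m) w (Suc n) k - Tm (Suc m) w n k
      = B (Suc m) w k / (1 - q ^ k) ^ Suc m * (qb (Suc n) k / qpoch (w * q ^ (Suc n - k)) q k - qb n k / qpoch (w * q ^ (n - k)) q k)"
    unfolding Tm_def frac_split by (simp only: frac_split right_diff_distrib)
  also have "\<dots> = q ^ k * c / u ^ Suc m * (u * (1 - w / q) * q ^ (Suc n - k) / ((1 - w * q ^ n) * (1 - q ^ Suc n)) * G)"
    unfolding TW[OF assms(2,3)] B_Suc_shift c_def G_def u_def ..
  also have "\<dots> = q ^ k * q ^ (Suc n - k) / ((1 - w * q ^ n) * (1 - q ^ Suc n)) * (1 - w / q) * (c * qb (Suc n) k / (u ^ m * qpoch (w * q ^ (n - k)) q k))"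
    unfolding G_def by (rule alg1[OF u0 Znz Enz])
  also have "\<dots> = q ^ Suc n / ((1 - w * q ^ n) * (1 - q ^ Suc n)) * (1 - w / q) * (c * qb (Suc n) k / (u ^ m * qpoch (w / q * q ^ (Suc n - k)) q k))"
    unfolding ww pq[symmetric] ..
  also have "\<dots> = Fz w 1 (Suc n) * (1 - w / q) * Tm m (w / q) (Suc n) k"
    unfolding Fz1 Tm_def c_def u_def ..
  finally show ?thesis .
qed

lemma Tm_last:
  assumes "Good w" "1 - w / q \<noteq> 0"
  shows "Tm (Suc m) w (Suc n) (Suc n) = Fz w 1 (Suc n) * (1 - w / q) * Tm m (w / q) (Suc n) (Suc n)"
proof -
  define u where "u = 1 - q ^ Suc n"
  have u0: "u \<noteq> 0" unfolding u_def by (rule one_minus_qpow) simp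
  have A0: "1 - w * q ^ n \<noteq> 0" using assms(1) unfolding Good_def by simp
  have Pn: "qpoch w q n \<noteq> 0" using Good_qpoch[OF assms(1), of 0 n] by simp
  have e1: "qpoch (w / q) q (Suc n) = (1 - w / q) * qpoch w q n"
    using qpoch_Suc'[of "w/q" q n] q0 by simp
  have e2: "qpoch w q (Suc n) = qpoch w q n * (1 - w * q ^ n)" by (rule qpoch_Suc)
  have "Tm (Suc m) w (Suc n) (Suc n) = q ^ Suc n * B m (w / q) (Suc n) * qb (Suc n) (Suc n)
        / (u ^ Suc m * (qpoch w q n * (1 - w * q ^ n)))"
    unfolding Tm_def B_Suc_shift u_def e2[symmetric] by simp
  also have "\<dots> = q ^ Suc n / ((1 - w * q ^ n) * u) * (1 - w / q) * (B m (w / q) (Suc n) * qb (Suc n) (Suc n) / (u ^ m * ((1 - w / q) * qpoch w q n)))"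
    by (rule alg2[OF u0 A0 assms(2) Pn, symmetric])
  also have "\<dots> = Fz w 1 (Suc n) * (1 - w / q) * Tm m (w / q) (Suc n) (Suc n)"
    unfolding Fz1 Tm_def u_def[symmetric] e1[symmetric] by simp
  finally show ?thesis .
qed

lemma P_rec:
  assumes "Good w" "Dm (Suc m) w \<noteq> 0"
  shows "P (Suc m) w (Suc n) - P (Suc m) w n = Fz w 1 (Suc n) * P m (w / q) (Suc n)"
proof -
  have t0: "1 - w / q \<noteq> 0" and D0: "Dm m (w / q) \<noteq> 0" using assms(2) unfolding Dm_Suc by auto
  have "(\<Sum>k\<in>{1..Suc n}. Tm (Suc m) w (Suc n) k) - (\<Sum>k\<in>{1..n}. Tm (Suc m) w n k)
     = (\<Sum>k\<in>{1..n}. Tm (Suc m) w (Suc n) k - Tm (Suc m) w n k) + Tm (Suc m) w (Suc n) (Suc n)"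
    by (simp add: sum_subtractf)
  also have "\<dots> = (\<Sum>k\<in>{1..n}. Fz w 1 (Suc n) * (1 - w / q) * Tm m (w / q) (Suc n) k)
       + Fz w 1 (Suc n) * (1 - w / q) * Tm m (w / q) (Suc n) (Suc n)"
    using Tm_step[OF _ _ assms(1)] Tm_last[OF assms(1) t0] by simp
  also have "\<dots> = Fz w 1 (Suc n) * (1 - w / q) * (\<Sum>k\<in>{1..Suc n}. Tm m (w / q) (Suc n) k)"
    by (simp add: sum_distrib_left distrib_left)
  finally have S: "(\<Sum>k\<in>{1..Suc n}. Tm (Suc m) w (Suc n) k) - (\<Sum>k\<in>{1..n}. Tm (Suc m) w n k)
     = Fz w 1 (Suc n) * (1 - w / q) * (\<Sum>k\<in>{1..Suc n}. Tm m (w / q) (Suc n) k)" .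
  have "P (Suc m) w (Suc n) - P (Suc m) w n
      = - ((\<Sum>k\<in>{1..Suc n}. Tm (Suc m) w (Suc n) k) - (\<Sum>k\<in>{1..n}. Tm (Suc m) w n k)) / (Dm m (w / q) * (1 - w / q))"
    unfolding P_def Dm_Suc by (rule gen)
  also have "\<dots> = Fz w 1 (Suc n) * P m (w / q) (Suc n)"
    unfolding S P_def by (rule gen2[OF t0 D0])
  finally show ?thesis .
qed

definition V :: "complex \<Rightarrow> nat \<Rightarrow> complex" where
  "V w n = (\<Sum>k\<le>n. Tm 0 w n k)"

lemma Tm0_0[simp]: "Tm m w n 0 = (if m = 0 then 1 else 0)"
  by (simp add: Tm_def B_def qb_def)

lemma B0_Suc: "B 0 w (Suc j) = (w - 1) * q ^ j * B 0 (w / q) j"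
proof -
  have "B 0 w (Suc j) = (w - 1) * (\<Prod>i<j. w - q ^ Suc i)"
    unfolding B_def by (subst prod.lessThan_Suc_shift) simp
  also have "(\<Prod>i<j. w - q ^ Suc i) = (\<Prod>i<j. q * (w / q - q ^ i))"
    by (rule prod.cong) (use q0 in \<open>auto simp: field_simps\<close>)
  also have "\<dots> = q ^ j * B 0 (w / q) j" unfolding B_def by (simp add: prod.distrib)
  finally show ?thesis by (simp add: mult.assoc)
qed

lemma qb_Suc_Suc:
  assumes "j \<le> n"
  shows "qb (Suc n) (Suc j) * (1 - q ^ Suc j) = qb n j * (1 - q ^ Suc n)"
proof -
  have e: "Suc n + 1 - Suc j = n + 1 - j" by simp
  have e2: "q ^ (n + 1 - j) * q ^ j = q ^ Suc n" using assms by (simp add: power_add[symmetric])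
  have Q0: "qpoch q q j \<noteq> 0" "1 - q ^ Suc j \<noteq> 0" using qpochq_nz one_minus_qpow[of "Suc j"] by auto
  show ?thesis unfolding qb_def e qpoch_Suc[of "q ^ (n + 1 - j)"] qpoch_Suc[of q q j] e2
    using Q0 by (simp add: field_simps)
qed

definition cc :: "complex \<Rightarrow> nat \<Rightarrow> complex" where
  "cc w n = (w - 1) * q ^ n / ((1 - w * q ^ n) * (1 - w * q ^ (n - 1)))"

lemma V_step_term:
  assumes "j < n" "Good w"
  shows "Tm 0 w (Suc n) (Suc j) - Tm 0 w n (Suc j) = cc w n * (1 - w / q) * Tm 0 (w / q) n j"
proof -
  define be where "be = B 0 (w / q) j"
  define X where "X = qb (Suc n) (Suc j)"
  define Y where "Y = qb n j"
  define ep where "ep = qpoch (w * q ^ (n - Suc j)) q j"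
  have gw: "1 - w * q ^ i \<noteq> 0" for i using assms(2) by (simp add: Good_def)
  have XY: "X * (1 - q ^ Suc j) = Y * (1 - q ^ Suc n)" unfolding X_def Y_def
    by (rule qb_Suc_Suc) (use assms(1) in simp)
  have uk: "1 - q ^ Suc j \<noteq> 0" "1 - q ^ Suc n \<noteq> 0" by (rule one_minus_qpow, simp)+
  have eps: "ep \<noteq> 0" unfolding ep_def by (rule Good_qpoch[OF assms(2)])
  have e1: "qpoch (w * q ^ (n - Suc j)) q (Suc j) = ep * (1 - w * q ^ (n - 1))"
  proof -
    have "w * q ^ (n - Suc j) * q ^ j = w * q ^ (n - 1)"
      using assms(1) by (simp add: mult.assoc power_add[symmetric])
    thus ?thesis unfolding ep_def qpoch_Suc by simp
  qed
  have e2: "w / q * q ^ (n - j) = w * q ^ (n - Suc j)"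
  proof -
    have "n - j = Suc (n - Suc j)" using assms(1) by simp
    thus ?thesis using q0 by simp
  qed
  have e3: "q ^ j * q ^ (n - j) = q ^ n" using assms(1) by (simp add: power_add[symmetric])
  have "Tm 0 w (Suc n) (Suc j) - Tm 0 w n (Suc j) = B 0 w (Suc j) *
     (qb (Suc n) (Suc j) / qpoch (w * q ^ (Suc n - Suc j)) q (Suc j) - qb n (Suc j) / qpoch (w * q ^ (n - Suc j)) q (Suc j))"
    by (simp add: Tm_def right_diff_distrib)
  also have "\<dots> = (w - 1) * q ^ j * be * ((1 - q ^ Suc j) * (1 - w / q) * q ^ (n - j) / ((1 - w * q ^ n) * (1 - q ^ Suc n))
       * (X / (ep * (1 - w * q ^ (n - 1)))))"
    using TW[of "Suc j" n w, OF _ assms(2)] assms(1) unfolding B0_Suc be_def X_def e1[symmetric] by simp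
  also have "\<dots> = (w - 1) * (q ^ j * q ^ (n - j)) / ((1 - w * q ^ n) * (1 - w * q ^ (n - 1))) * (1 - w / q) * (be * Y / ep)"
    by (rule alg3[OF XY uk gw gw eps])
  also have "\<dots> = cc w n * (1 - w / q) * Tm 0 (w / q) n j"
    unfolding cc_def Tm_def e2 e3 be_def Y_def ep_def by simp
  finally show ?thesis .
qed

lemma V_last:
  assumes "1 \<le> n" "Good w" "1 - w / q \<noteq> 0"
  shows "Tm 0 w (Suc n) (Suc n) = cc w n * (1 - w / q) * Tm 0 (w / q) n n"
proof -
  have gw: "1 - w * q ^ i \<noteq> 0" for i using assms(2) by (simp add: Good_def)
  have uN: "1 - q ^ Suc n \<noteq> 0" by (rule one_minus_qpow, simp)
  have XY: "qb (Suc n) (Suc n) = qb n n" using qb_Suc_Suc[of n n] uN by simp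
  have Pn: "qpoch w q n \<noteq> 0" using Good_qpoch[OF assms(2), of 0 n] by simp
  have e0: "w / q * q ^ n = w * q ^ (n - 1)"
    using assms(1) q0 by (cases n) (simp_all add: field_simps)
  have PP: "qpoch (w / q) q n * (1 - w * q ^ (n - 1)) = (1 - w / q) * qpoch w q n"
    using qpoch_Suc[of "w / q" q n] qpoch_Suc'[of "w / q" q n] q0 e0 by simp
  have "Tm 0 w (Suc n) (Suc n) = (w - 1) * q ^ n * B 0 (w / q) n * qb n n / (qpoch w q n * (1 - w * q ^ n))"
    unfolding Tm_def B0_Suc XY by (simp add: qpoch_Suc)
  also have "\<dots> = (w - 1) * q ^ n / ((1 - w * q ^ n) * (1 - w * q ^ (n - 1))) * (1 - w / q) * (B 0 (w / q) n * qb n n / qpoch (w / q) q n)"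
    by (rule alg4[OF PP gw gw assms(3) Pn])
  also have "\<dots> = cc w n * (1 - w / q) * Tm 0 (w / q) n n"
    unfolding cc_def Tm_def by simp
  finally show ?thesis .
qed

lemma V_rec:
  assumes "1 \<le> n" "Good w" "1 - w / q \<noteq> 0"
  shows "V w (Suc n) = V w n + cc w n * (1 - w / q) * V (w / q) n"
proof -
  obtain n' where n: "n = Suc n'" using assms(1) by (cases n) auto
  have "(\<Sum>k\<le>n. Tm 0 w (Suc n) k) - (\<Sum>k\<le>n. Tm 0 w n k) = (\<Sum>k\<le>n. Tm 0 w (Suc n) k - Tm 0 w n k)"
    by (simp add: sum_subtractf)
  also have "\<dots> = (\<Sum>i\<le>n'. Tm 0 w (Suc n) (Suc i) - Tm 0 w n (Suc i))"
    unfolding n by (subst sum.atMost_Suc_shift) simp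
  also have "\<dots> = (\<Sum>i\<le>n'. cc w n * (1 - w / q) * Tm 0 (w / q) n i)"
    by (rule sum.cong[OF refl], rule V_step_term[OF _ assms(2)]) (simp add: n)
  finally have S: "(\<Sum>k\<le>n. Tm 0 w (Suc n) k) = (\<Sum>k\<le>n. Tm 0 w n k) + (\<Sum>i\<le>n'. cc w n * (1 - w / q) * Tm 0 (w / q) n i)"
    by (simp add: algebra_simps)
  have "V w (Suc n) = (\<Sum>k\<le>n. Tm 0 w (Suc n) k) + Tm 0 w (Suc n) (Suc n)"
    unfolding V_def by simp
  also have "\<dots> = V w n + cc w n * (1 - w / q) * ((\<Sum>i\<le>n'. Tm 0 (w / q) n i) + Tm 0 (w / q) n n)"
    unfolding S V_last[OF assms] V_def by (simp add: sum_distrib_left distrib_left)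
  also have "(\<Sum>i\<le>n'. Tm 0 (w / q) n i) + Tm 0 (w / q) n n = V (w / q) n"
    unfolding V_def n by simp
  finally show ?thesis .
qed

lemma Good_div:
  assumes "Good w" "1 - w / q \<noteq> 0"
  shows "Good (w / q)"
  unfolding Good_def
proof
  fix j show "1 - w / q * q ^ j \<noteq> 0"
  proof (cases j)
    case 0 thus ?thesis using assms(2) by simp
  next
    case (Suc i)
    have "w / q * q ^ j = w * q ^ i" using q0 Suc by simp
    thus ?thesis using assms(1) unfolding Good_def by simp
  qed
qed

lemma V_q:
  assumes "1 \<le> N"
  shows "V q N = 0"
proof -
  have Bz: "B 0 q k = 0" if "2 \<le> k" for k
  proof -
    have "1 \<in> {..<k}" using that by simp
    moreover have "q - q ^ (0 + 1) = 0" by simp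
    ultimately show ?thesis unfolding B_def by (metis (no_types, lifting) finite_lessThan prod_zero_iff)
  qed
  have "V q N = (\<Sum>k\<in>{0, 1}. Tm 0 q N k)"
    unfolding V_def
    by (rule sum.mono_neutral_left[symmetric]) (use assms Bz in \<open>auto simp: Tm_def\<close>)
  also have "\<dots> = 1 + Tm 0 q N 1" by simp
  also have "Tm 0 q N 1 = (q - 1) * ((1 - q ^ N) / (1 - q)) / (1 - q ^ N)"
  proof -
    have "q * q ^ (N - 1) = q ^ N" using assms by (cases N) auto
    thus ?thesis unfolding Tm_def B_def qb_def qpoch_def by simp
  qed
  also have "\<dots> = (q - 1) / (1 - q)"
    using one_minus_qpow[of N] assms by simp
  also have "\<dots> = -1"
    using one_minus_qpow[of 1] by (simp add: divide_eq_eq)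
  finally show ?thesis by simp
qed

lemma V_zero:
  assumes "1 \<le> n" "Good w"
  shows "V w n = 0"
  using assms
proof (induction n arbitrary: w rule: nat_induct_at_least)
  case base
  have w1: "1 - w \<noteq> 0" using base unfolding Good_def by (metis mult.right_neutral power_0)
  have qb1: "qb 1 1 = 1" unfolding qb_def using qpochq_nz[of 1] by simp
  have "V w 1 = 1 + Tm 0 w 1 1" unfolding V_def by simp
  also have "Tm 0 w 1 1 = (w - 1) / (1 - w)" unfolding Tm_def qb1 by (simp add: B_def qpoch_def)
  finally show ?case using w1 by (simp add: field_simps)
next
  case (Suc n)
  show ?case
  proof (cases "w = q")
    case True thus ?thesis using V_q[of "Suc n"] by simp
  next
    case False
    hence t: "1 - w / q \<noteq> 0" using q0 by (simp add: field_simps)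
    show ?thesis unfolding V_rec[OF Suc(1) Suc(3) t]
      using Suc(2)[OF Suc(3)] Suc(2)[OF Good_div[OF Suc(3) t]] by simp
  qed
qed

lemma P0:
  assumes "1 \<le> n" "Good w"
  shows "P 0 w n = 1"
proof -
  have "{..n} = insert 0 {1..n}" by auto
  hence h: "1 + (\<Sum>k\<in>{1..n}. Tm 0 w n k) = 0" using V_zero[OF assms] unfolding V_def by simp
  have "- (\<Sum>k\<in>{1..n}. Tm 0 w n k) = - (\<Sum>k\<in>{1..n}. Tm 0 w n k) + (1 + (\<Sum>k\<in>{1..n}. Tm 0 w n k))"
    unfolding h by simp
  also have "\<dots> = 1" by simp
  finally show ?thesis unfolding P_def Dm_def by simp
qed

primrec Q :: "nat \<Rightarrow> complex \<Rightarrow> nat \<Rightarrow> complex" where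
  "Q 0 w n = 1"
| "Q (Suc m) w n = (\<Sum>l\<in>{1..n}. Fz w 1 l * Q m (w / q) l)"

lemma QP:
  assumes "Good w" "Dm m w \<noteq> 0" "1 \<le> n \<or> 1 \<le> m"
  shows "Q m w n = P m w n"
  using assms
proof (induction m arbitrary: w n)
  case 0 thus ?case using P0 by simp
next
  case (Suc m)
  note pr = Suc.prems
  have t0: "1 - w / q \<noteq> 0" and D0: "Dm m (w / q) \<noteq> 0" using pr(2) unfolding Dm_Suc by auto
  have G: "Good (w / q)" by (rule Good_div[OF pr(1) t0])
  show ?case
  proof (induction n)
    case 0 thus ?case unfolding P_def by simp
  next
    case (Suc n)
    have "Q (Suc m) w (Suc n) = Q (Suc m) w n + Fz w 1 (Suc n) * Q m (w / q) (Suc n)" by simp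
    also have "\<dots> = P (Suc m) w n + Fz w 1 (Suc n) * P m (w / q) (Suc n)"
      using Suc.IH \<open>\<And>w n. Good w \<Longrightarrow> Dm m w \<noteq> 0 \<Longrightarrow> 1 \<le> n \<or> 1 \<le> m \<Longrightarrow> Q m w n = P m w n\<close>[OF G D0] by simp
    also have "\<dots> = P (Suc m) w (Suc n)" using P_rec[OF pr(1) pr(2)] by (simp add: algebra_simps)
    finally show ?case .
  qed
qed

lemma Fz_shift: "Fz w (Suc i) l = Fz (w / q) i l"
proof -
  have e: "int l - int (Suc i) = (int l - int i) - 1" by simp
  have "q powi (int l - int (Suc i)) = q powi (int l - int i) / q"
    unfolding e using power_int_diff[of q "int l - int i" 1] q0 by simp
  thus ?thesis unfolding Fz_def by simp
qed

lemma QCS: "Q m w n = CS m (Fz w) n"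
proof (induction m arbitrary: w n)
  case 0 thus ?case by (simp add: CS0)
next
  case (Suc m)
  have "(\<lambda>i. Fz w (Suc i)) = Fz (w / q)" by (rule ext)+ (rule Fz_shift)
  thus ?case unfolding CS_Suc Q.simps Suc.IH by simp
qed

lemma summable_Fz: "summable (\<lambda>l. norm (Fz w i l))"
proof (rule summable_comparison_test_ev)
  have "(\<lambda>l. w * q powi (int l - int i)) = (\<lambda>l. w / q ^ i * q ^ l)"
    using q0 by (intro ext) (simp add: power_int_diff)
  moreover have "(\<lambda>l. w / q ^ i * q ^ l) \<longlonglongrightarrow> 0"
    by (intro tendsto_mult_right_zero LIMSEQ_power_zero) (use qn in auto)
  ultimately have "(\<lambda>l. norm (w * q powi (int l - int i))) \<longlonglongrightarrow> 0"
    by (simp add: tendsto_norm_zero)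
  hence e1: "eventually (\<lambda>l. norm (w * q powi (int l - int i)) < 1/2) sequentially"
    by (rule order_tendstoD) simp
  have "(\<lambda>l. norm (q ^ l)) \<longlonglongrightarrow> 0"
    by (intro tendsto_norm_zero LIMSEQ_power_zero) (use qn in auto)
  hence e2: "eventually (\<lambda>l. norm (q ^ l) < 1/2) sequentially"
    by (rule order_tendstoD) simp
  show "eventually (\<lambda>l. norm (norm (Fz w i l)) \<le> 4 * norm q ^ l) sequentially"
    using e1 e2
  proof eventually_elim
    case (elim l)
    have a: "norm (1 - w * q powi (int l - int i)) \<ge> 1/2"
      using norm_triangle_ineq2[of 1 "w * q powi (int l - int i)"] elim(1) by simp
    have b: "norm (1 - q ^ l) \<ge> 1/2"
      using norm_triangle_ineq2[of 1 "q ^ l"] elim(2) by simp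
    have "norm (1 - w * q powi (int l - int i)) * norm (1 - q ^ l) \<ge> 1/2 * (1/2)"
      by (rule mult_mono) (use a b in auto)
    hence "norm q ^ l / (norm (1 - w * q powi (int l - int i)) * norm (1 - q ^ l)) \<le> norm q ^ l / (1/4)"
      by (intro divide_left_mono) auto
    thus ?case unfolding Fz_def by (simp add: norm_divide norm_mult norm_power)
  qed
  show "summable (\<lambda>l. 4 * norm q ^ l)"
    by (intro summable_mult summable_geometric) (use qn in auto)
qed

definition gch :: "complex \<Rightarrow> nat \<Rightarrow> (nat \<Rightarrow> nat) \<Rightarrow> complex" where
  "gch w m k = (\<Prod>i\<in>{1..m}. Fz w i (k i))"

lemma chain_summable:
  assumes "1 \<le> m"
  shows "gch w m summable_on chain_idx m"
proof (rule abs_summable_summable)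
  define h where "h l = (\<Sum>i\<in>{1..m}. norm (Fz w i l))" for l
  have hs: "summable h" unfolding h_def by (intro summable_sum summable_Fz)
  have h0: "\<forall>l. 0 \<le> h l" unfolding h_def by (auto intro: sum_nonneg)
  have Gh: "\<forall>i\<in>{1..m}. \<forall>l\<ge>1. 0 \<le> norm (Fz w i l) \<and> norm (Fz w i l) \<le> h l"
    unfolding h_def by (auto intro!: member_le_sum)
  show "(\<lambda>x. norm (gch w m x)) summable_on chain_idx m"
  proof (rule nonneg_bdd_above_summable_on)
    show "bdd_above (sum (\<lambda>k. norm (gch w m k)) ` {F. F \<subseteq> chain_idx m \<and> finite F})"
    proof (rule bdd_aboveI2)
      fix F assume F: "F \<in> {F. F \<subseteq> chain_idx m \<and> finite F}"
      obtain N where N: "F \<subseteq> ch m N"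
      proof -
        have "filterlim (\<lambda>n. ch m n) (finite_subsets_at_top (chain_idx m)) sequentially"
          by (rule ch_filterlim[OF assms])
        hence "eventually (\<lambda>n. finite (ch m n) \<and> F \<subseteq> ch m n \<and> ch m n \<subseteq> chain_idx m) sequentially"
          using F unfolding filterlim_finite_subsets_at_top by auto
        hence "eventually (\<lambda>n. F \<subseteq> ch m n) sequentially"
          by (rule eventually_mono) auto
        thus ?thesis using that by (auto simp: eventually_at_top_linorder)
      qed
      have "(\<Sum>k\<in>F. norm (gch w m k)) \<le> (\<Sum>k\<in>ch m N. norm (gch w m k))"
        by (rule sum_mono2[OF ch_finite N]) auto
      also have "\<dots> = CS m (\<lambda>i l. norm (Fz w i l)) N"
        unfolding CS_def gch_def by (simp add: prod_norm)
      also have "\<dots> \<le> (suminf h) ^ m" using CS_bound[OF Gh hs h0] by auto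
      finally show "(\<Sum>k\<in>F. norm (gch w m k)) \<le> (suminf h) ^ m" .
    qed
  qed auto
qed

definition bb :: "nat \<Rightarrow> complex \<Rightarrow> nat \<Rightarrow> complex" where
  "bb m z k = B m z (Suc k) / (Dm m z * qpoch q q (Suc k) * (1 - q ^ Suc k) ^ m)"

definition rho :: "complex \<Rightarrow> nat \<Rightarrow> nat \<Rightarrow> complex" where
  "rho z n K = qpoch (q ^ (n + 1 - K)) q K / qpoch (z * q ^ (n - K)) q K"

definition aa :: "nat \<Rightarrow> complex \<Rightarrow> nat \<Rightarrow> nat \<Rightarrow> complex" where
  "aa m z k n = (if Suc k \<le> n then Tm m z n (Suc k) / Dm m z else 0)"

lemma stmt_eq:
  assumes "z \<noteq> 0"
  shows "qpoch (q ^ m / z) q (Suc k) * z ^ Suc k /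
           (qpoch (z * q powi (- int m)) q m * qpoch q q (Suc k) * (1 - q ^ Suc k) ^ m) = bb m z k"
proof -
  have h: "qpoch (q ^ m / z) q K * z ^ K = B m z K" for K
  proof -
    have "qpoch (q ^ m / z) q K * z ^ K = (\<Prod>j<K. (1 - q ^ m / z * q ^ j) * z)"
      unfolding qpoch_def by (simp add: prod.distrib)
    also have "\<dots> = B m z K" unfolding B_def
      by (rule prod.cong) (use assms in \<open>auto simp: field_simps power_add\<close>)
    finally show ?thesis .
  qed
  show ?thesis unfolding h[of "Suc k"] bb_def Dm_def ..
qed

lemma aa_eq:
  assumes "Suc k \<le> n" "Good z" "Dm m z \<noteq> 0"
  shows "aa m z k n = bb m z k * rho z n (Suc k)"
proof -
  have n1: "qpoch q q (Suc k) \<noteq> 0" "1 - q ^ Suc k \<noteq> 0" "qpoch (z * q ^ (n - Suc k)) q (Suc k) \<noteq> 0"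
    using qpochq_nz one_minus_qpow[of "Suc k"] Good_qpoch[OF assms(2)] by auto
  show ?thesis unfolding aa_def bb_def rho_def Tm_def qb_def using assms(1,3) n1
    by (simp add: field_simps)
qed

lemma sum_aa:
  "(\<Sum>k\<in>{1..n}. Tm m z n k) / Dm m z = suminf (\<lambda>k. aa m z k n)"
proof -
  have "suminf (\<lambda>k. aa m z k n) = (\<Sum>k<n. aa m z k n)"
    by (rule suminf_finite) (auto simp: aa_def)
  also have "\<dots> = (\<Sum>k<n. Tm m z n (Suc k) / Dm m z)"
    by (rule sum.cong) (auto simp: aa_def)
  also have "\<dots> = (\<Sum>k\<in>{1..n}. Tm m z n k) / Dm m z"
    by (simp add: sum_divide_distrib sum.atLeast1_atMost_eq)
  finally show ?thesis by simp
qed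

lemma rho_lim: "(\<lambda>n. rho z n K) \<longlonglongrightarrow> 1"
proof -
  define f where "f n = (\<Prod>j<K. 1 - q ^ n * (q * q ^ j / q ^ K)) / (\<Prod>j<K. 1 - q ^ n * (z * q ^ j / q ^ K))" for n
  have ev: "eventually (\<lambda>n. f n = rho z n K) sequentially"
  proof -
    have fr: "f n = rho z n K" if "K \<le> n" for n
    proof -
      have "q ^ n = q ^ (n - K) * q ^ K" using that by (simp add: power_add[symmetric])
      hence "q ^ (n + 1 - K) = q ^ n * q / q ^ K" "q ^ (n - K) = q ^ n / q ^ K"
        using that q0 by (simp_all add: Suc_diff_le)
      thus ?thesis unfolding f_def rho_def qpoch_def by (simp add: mult_ac)
    qed
    show ?thesis using eventually_ge_at_top[of K] by (rule eventually_mono) (simp add: fr)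
  qed
  have q0': "(\<lambda>n. q ^ n) \<longlonglongrightarrow> 0" by (rule LIMSEQ_power_zero) (use qn in auto)
  have "f \<longlonglongrightarrow> (\<Prod>j<K. 1 - 0 * (q * q ^ j / q ^ K)) / (\<Prod>j<K. 1 - 0 * (z * q ^ j / q ^ K))"
    unfolding f_def by (intro tendsto_intros q0') simp
  hence "f \<longlonglongrightarrow> 1" by simp
  thus ?thesis using tendsto_cong[OF ev] by simp
qed

lemma rho_bound:
  assumes "norm z < 1" "K \<le> n"
  shows "norm (rho z n K) \<le> exp (1 / (1 - norm q)) / exp (- (norm z / ((1 - norm z) * (1 - norm q))))"
proof -
  define r where "r = norm q"
  have r: "0 \<le> r" "r < 1" using qn unfolding r_def by auto
  have num: "norm (qpoch (q ^ (n + 1 - K)) q K) \<le> exp (1 / (1 - r))"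
  proof -
    have "norm (qpoch (q ^ (n + 1 - K)) q K) = (\<Prod>j<K. norm (1 - q ^ (n + 1 - K) * q ^ j))"
      unfolding qpoch_def by (simp add: prod_norm)
    also have "\<dots> \<le> (\<Prod>j<K. 1 + r ^ (n + 1 - K + j))"
    proof (rule prod_mono)
      fix j show "0 \<le> norm (1 - q ^ (n + 1 - K) * q ^ j) \<and> norm (1 - q ^ (n + 1 - K) * q ^ j) \<le> 1 + r ^ (n + 1 - K + j)"
        using norm_triangle_ineq4[of 1 "q ^ (n + 1 - K) * q ^ j"] unfolding r_def
        by (simp add: norm_mult norm_power power_add)
    qed
    also have "\<dots> \<le> exp (1 / (1 - r))"
      by (rule prod_up[OF _ r]) (use r in \<open>auto simp: power_add intro!: mult_left_le_one_le power_le_one\<close>)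
    finally show ?thesis .
  qed
  have den: "exp (- (norm z / ((1 - norm z) * (1 - r)))) \<le> norm (qpoch (z * q ^ (n - K)) q K)"
  proof -
    have "exp (- (norm z / ((1 - norm z) * (1 - r)))) \<le> (\<Prod>j<K. 1 - norm z * r ^ (n - K + j))"
    proof (rule prod_low[OF _ _ assms(1) r])
      fix j assume "j < K"
      have "r ^ (n - K + j) \<le> r ^ j" unfolding power_add
        by (rule mult_left_le_one_le) (use r in \<open>auto simp: power_le_one\<close>)
      thus "0 \<le> norm z * r ^ (n - K + j) \<and> norm z * r ^ (n - K + j) \<le> norm z * r ^ j"
        using r by (auto intro: mult_left_mono)
    qed simp
    also have "\<dots> \<le> (\<Prod>j<K. norm (1 - z * q ^ (n - K) * q ^ j))"
    proof (rule prod_mono)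
      fix j
      have le1: "norm z * r ^ (n - K + j) \<le> 1"
        using assms(1) r by (intro mult_le_one) (auto simp: power_le_one)
      show "0 \<le> 1 - norm z * r ^ (n - K + j) \<and> 1 - norm z * r ^ (n - K + j) \<le> norm (1 - z * q ^ (n - K) * q ^ j)"
        using norm_triangle_ineq2[of 1 "z * q ^ (n - K) * q ^ j"] le1 unfolding r_def
        by (simp add: norm_mult norm_power power_add mult.assoc)
    qed
    also have "\<dots> = norm (qpoch (z * q ^ (n - K)) q K)"
      unfolding qpoch_def by (simp add: prod_norm)
    finally show ?thesis .
  qed
  have "norm (rho z n K) = norm (qpoch (q ^ (n + 1 - K)) q K) / norm (qpoch (z * q ^ (n - K)) q K)"
    unfolding rho_def by (simp add: norm_divide)
  also have "\<dots> \<le> exp (1 / (1 - r)) / exp (- (norm z / ((1 - norm z) * (1 - r))))"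
    by (rule frac_le[OF _ num _ den]) auto
  finally show ?thesis unfolding r_def .
qed

lemma z_small:
  assumes "1 \<le> m" "Dm m z \<noteq> 0" "summable (bb m z)"
  shows "norm z < 1"
proof (rule ccontr)
  assume "\<not> norm z < 1"
  hence z1: "1 \<le> norm z" by simp
  define r where "r = norm q"
  have r: "0 \<le> r" "r < 1" using qn unfolding r_def by auto
  define c0 where "c0 = exp (- (r / ((1 - r) * (1 - r)))) / (norm (Dm m z) * exp (1 / (1 - r)) * 2 ^ m)"
  have c0pos: "0 < c0" unfolding c0_def using assms(2) by auto
  have low: "c0 \<le> norm (bb m z k)" for k
  proof -
    define K where "K = Suc k"
    have nB: "exp (- (r / ((1 - r) * (1 - r)))) \<le> norm (B m z K)"
    proof -
      have "exp (- (r / ((1 - r) * (1 - r)))) \<le> (\<Prod>j<K. 1 - r ^ (m + j))"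
      proof (rule prod_low[OF _ r(1) r(2) r(1) r(2)])
        fix j
        have "r ^ m \<le> r" using power_decreasing[of 1 m r] assms(1) r by simp
        hence "r ^ m * r ^ j \<le> r * r ^ j" by (rule mult_right_mono) (use r in auto)
        thus "0 \<le> r ^ (m + j) \<and> r ^ (m + j) \<le> r * r ^ j" using r by (simp add: power_add)
      qed
      also have "\<dots> \<le> (\<Prod>j<K. norm (z - q ^ (m + j)))"
      proof (rule prod_mono)
        fix j
        have "r ^ (m + j) \<le> 1" using r by (simp add: power_le_one)
        thus "0 \<le> 1 - r ^ (m + j) \<and> 1 - r ^ (m + j) \<le> norm (z - q ^ (m + j))"
          using norm_triangle_ineq2[of z "q ^ (m + j)"] z1 unfolding r_def by (simp add: norm_power)
      qed
      also have "\<dots> = norm (B m z K)" unfolding B_def by (simp add: prod_norm)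
      finally show ?thesis .
    qed
    have nQ: "norm (qpoch q q K) \<le> exp (1 / (1 - r))"
    proof -
      have "norm (qpoch q q K) = (\<Prod>j<K. norm (1 - q * q ^ j))" unfolding qpoch_def by (simp add: prod_norm)
      also have "\<dots> \<le> (\<Prod>j<K. 1 + r ^ Suc j)"
      proof (rule prod_mono)
        fix j
        have "norm (1 - q * q ^ j) \<le> norm (1::complex) + norm (q * q ^ j)" by (rule norm_triangle_ineq4)
        thus "0 \<le> norm (1 - q * q ^ j) \<and> norm (1 - q * q ^ j) \<le> 1 + r ^ Suc j"
          by (simp add: r_def norm_mult norm_power)
      qed
      also have "\<dots> \<le> exp (1 / (1 - r))"
        by (rule prod_up[OF _ r]) (use r in \<open>auto intro!: mult_left_le_one_le\<close>)
      finally show ?thesis .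
    qed
    have nU: "norm (1 - q ^ K) ^ m \<le> 2 ^ m"
    proof (rule power_mono)
      have "r ^ K \<le> 1" using r by (simp add: power_le_one)
      thus "norm (1 - q ^ K) \<le> 2" using norm_triangle_ineq4[of 1 "q ^ K"] unfolding r_def
        by (simp add: norm_power)
    qed simp
    have d0: "0 < norm (Dm m z) * norm (qpoch q q K) * norm (1 - q ^ K) ^ m"
      using assms(2) qpochq_nz[of K] one_minus_qpow[of K] unfolding K_def by auto
    have dle: "norm (Dm m z) * norm (qpoch q q K) * norm (1 - q ^ K) ^ m \<le> norm (Dm m z) * exp (1 / (1 - r)) * 2 ^ m"
      by (intro mult_mono mult_left_mono nQ nU) auto
    have "c0 \<le> norm (B m z K) / (norm (Dm m z) * norm (qpoch q q K) * norm (1 - q ^ K) ^ m)"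
      unfolding c0_def by (rule frac_le[OF _ nB d0 dle]) simp
    thus ?thesis unfolding bb_def K_def by (simp add: norm_divide norm_mult norm_power)
  qed
  have "(\<lambda>k. norm (bb m z k)) \<longlonglongrightarrow> 0"
    using summable_LIMSEQ_zero[OF assms(3)] by (rule tendsto_norm_zero)
  hence "eventually (\<lambda>k. norm (bb m z k) < c0) sequentially"
    by (rule order_tendstoD) (rule c0pos)
  then obtain k where "norm (bb m z k) < c0" by (auto simp: eventually_sequentially)
  thus False using low[of k] by simp
qed

lemma bb_ratio:
  assumes "Dm m z \<noteq> 0"
  shows "bb m z (Suc k) = bb m z k * ((z - q ^ (m + Suc k)) * (1 - q ^ Suc k) ^ m / (1 - q ^ Suc (Suc k)) ^ Suc m)"
proof -
  have n: "1 - q ^ Suc k \<noteq> 0" "1 - q ^ Suc (Suc k) \<noteq> 0" "qpoch q q (Suc k) \<noteq> 0"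
    using one_minus_qpow[of "Suc k"] one_minus_qpow[of "Suc (Suc k)"] qpochq_nz by auto
  have e1: "B m z (Suc (Suc k)) = B m z (Suc k) * (z - q ^ (m + Suc k))"
    unfolding B_def by simp
  have e2: "qpoch q q (Suc (Suc k)) = qpoch q q (Suc k) * (1 - q ^ Suc (Suc k))"
    by (simp add: qpoch_Suc)
  show ?thesis unfolding bb_def e1 e2 using n assms by (simp add: field_simps)
qed

lemma summable_norm_bb:
  assumes "norm z < 1" "Dm m z \<noteq> 0"
  shows "summable (\<lambda>k. norm (bb m z k))"
proof -
  define R where "R k = (z - q ^ (m + Suc k)) * (1 - q ^ Suc k) ^ m / (1 - q ^ Suc (Suc k)) ^ Suc m" for k
  have R_eq: "R = (\<lambda>k. (z - q ^ Suc m * q ^ k) * (1 - q * q ^ k) ^ m / (1 - q ^ 2 * q ^ k) ^ Suc m)"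
    unfolding R_def by (intro ext) (simp add: power_add mult_ac numeral_2_eq_2)
  have q0': "(\<lambda>n. q ^ n) \<longlonglongrightarrow> 0" by (rule LIMSEQ_power_zero) (use qn in auto)
  have "R \<longlonglongrightarrow> (z - q ^ Suc m * 0) * (1 - q * 0) ^ m / (1 - q ^ 2 * 0) ^ Suc m"
    unfolding R_eq by (intro tendsto_intros q0') simp
  hence "R \<longlonglongrightarrow> z" by simp
  hence "(\<lambda>k. norm (R k)) \<longlonglongrightarrow> norm z" by (rule tendsto_norm)
  hence "eventually (\<lambda>k. norm (R k) < (1 + norm z) / 2) sequentially"
    by (rule order_tendstoD) (use assms(1) in simp)
  then obtain N where N: "\<And>n. n \<ge> N \<Longrightarrow> norm (R n) < (1 + norm z) / 2"
    by (auto simp: eventually_sequentially)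
  show ?thesis
  proof (rule summable_ratio_test[of "(1 + norm z) / 2" N])
    show "(1 + norm z) / 2 < 1" using assms(1) by simp
    fix n assume "N \<le> n"
    have "norm (norm (bb m z (Suc n))) = norm (bb m z n) * norm (R n)"
      unfolding R_def by (simp only: bb_ratio[OF assms(2)] norm_mult real_norm_def abs_mult abs_norm_cancel)
    also have "\<dots> \<le> norm (bb m z n) * ((1 + norm z) / 2)"
      using N[OF \<open>N \<le> n\<close>] by (intro mult_left_mono) auto
    finally show "norm (norm (bb m z (Suc n))) \<le> (1 + norm z) / 2 * norm (norm (bb m z n))"
      by (simp add: mult_ac)
  qed
qed

lemma P_lim:
  assumes "Good z" "Dm m z \<noteq> 0" "norm z < 1"
  shows "(\<lambda>n. P m z n) \<longlonglongrightarrow> - suminf (bb m z)"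
proof -
  define C where "C = exp (1 / (1 - norm q)) / exp (- (norm z / ((1 - norm z) * (1 - norm q))))"
  have C0: "0 \<le> C" unfolding C_def by simp
  have sb: "summable (\<lambda>k. norm (bb m z k))" by (rule summable_norm_bb[OF assms(3,2)])
  have lim: "(\<lambda>n. aa m z k n) \<longlonglongrightarrow> bb m z k" for k
  proof -
    have "(\<lambda>n. bb m z k * rho z n (Suc k)) \<longlonglongrightarrow> bb m z k * 1"
      by (intro tendsto_intros rho_lim)
    moreover have "eventually (\<lambda>n. bb m z k * rho z n (Suc k) = aa m z k n) sequentially"
      using eventually_ge_at_top[of "Suc k"] by (rule eventually_mono) (simp add: aa_eq[OF _ assms(1,2)])
    ultimately show ?thesis using tendsto_cong by fastforce
  qed
  have bound: "eventually (\<lambda>(k, n). norm (aa m z k n) \<le> C * norm (bb m z k)) (at_top \<times>\<^sub>F sequentially)"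
  proof (rule always_eventually, safe)
    fix k n
    show "norm (aa m z k n) \<le> C * norm (bb m z k)"
    proof (cases "Suc k \<le> n")
      case True
      have "norm (aa m z k n) = norm (bb m z k) * norm (rho z n (Suc k))"
        unfolding aa_eq[OF True assms(1,2)] by (simp add: norm_mult)
      also have "\<dots> \<le> norm (bb m z k) * C"
        unfolding C_def by (intro mult_left_mono rho_bound[OF assms(3) True]) auto
      finally show ?thesis by (simp add: mult_ac)
    next
      case False thus ?thesis using C0 by (simp add: aa_def)
    qed
  qed
  have "((\<lambda>n. suminf (\<lambda>k. aa m z k n)) \<longlonglongrightarrow> suminf (bb m z))"
    using tannerys_theorem[of "\<lambda>k n. aa m z k n" "bb m z" sequentially "\<lambda>k. C * norm (bb m z k)",
      OF lim bound summable_mult[OF sb]] by simp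
  hence "(\<lambda>n. - suminf (\<lambda>k. aa m z k n)) \<longlonglongrightarrow> - suminf (bb m z)" by (rule tendsto_minus)
  moreover have "P m z n = - suminf (\<lambda>k. aa m z k n)" for n
    unfolding P_def sum_aa[symmetric] by simp
  ultimately show ?thesis by simp
qed

end

theorem corollary4p2:
  fixes q z :: complex and m :: nat
  assumes "m \<ge> 1"
    and "norm q < 1" and "q \<noteq> 0" and "z \<noteq> 0"
    and "qpoch (z * q powi (- int m)) q m \<noteq> 0"
    and "\<And>k i. k \<ge> 1 \<Longrightarrow> i \<in> {1..m} \<Longrightarrow> 1 - z * q powi (int k - int i) \<noteq> 0"
    and "summable (\<lambda>k. qpoch (q ^ m / z) q (Suc k) * z ^ Suc k /
           (qpoch (z * q powi (- int m)) q m * qpoch q q (Suc k) * (1 - q ^ Suc k) ^ m))"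
  shows "((\<lambda>k. \<Prod>i\<in>{1..m}. q ^ k i / ((1 - z * q powi (int (k i) - int i)) * (1 - q ^ k i)))
           has_sum
          (- (\<Sum>k. qpoch (q ^ m / z) q (Suc k) * z ^ Suc k /
           (qpoch (z * q powi (- int m)) q m * qpoch q q (Suc k) * (1 - q ^ Suc k) ^ m))))
         (chain_idx m)"
proof -
  interpret qctx q by unfold_locales (use assms(2,3) in auto)
  have G: "Good z"
    unfolding Good_def
  proof
    fix j
    have "1 - z * q powi (int (Suc j) - int 1) \<noteq> 0" using assms(6)[of "Suc j" 1] assms(1) by auto
    thus "1 - z * q ^ j \<noteq> 0" by simp
  qed
  have D: "Dm m z \<noteq> 0" using assms(5) unfolding Dm_def .
  have stmt: "(\<lambda>k. qpoch (q ^ m / z) q (Suc k) * z ^ Suc k /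
           (qpoch (z * q powi (- int m)) q m * qpoch q q (Suc k) * (1 - q ^ Suc k) ^ m)) = bb m z"
    by (rule ext) (rule stmt_eq[OF assms(4)])
  have zs: "norm z < 1" using z_small[OF assms(1) D] assms(7) unfolding stmt by simp
  have PL: "(\<lambda>n. P m z n) \<longlonglongrightarrow> - suminf (bb m z)" by (rule P_lim[OF G D zs])
  have sum_ch: "sum (gch z m) (ch m n) = P m z n" for n
    using QP[OF G D, of n] QCS[of m z n] assms(1) unfolding CS_def gch_def by simp
  have summ: "gch z m summable_on chain_idx m" by (rule chain_summable[OF assms(1)])
  have "(\<lambda>n. sum (gch z m) (ch m n)) \<longlonglongrightarrow> infsum (gch z m) (chain_idx m)"
    by (rule filterlim_compose[OF infsum_tendsto[OF summ] ch_filterlim[OF assms(1)]])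
  hence "infsum (gch z m) (chain_idx m) = - suminf (bb m z)"
    using PL unfolding sum_ch by (rule LIMSEQ_unique)
  hence hs: "(gch z m has_sum (- suminf (bb m z))) (chain_idx m)"
    using has_sum_infsum[OF summ] by simp
  have gg: "gch z m = (\<lambda>k. \<Prod>i\<in>{1..m}. q ^ k i / ((1 - z * q powi (int (k i) - int i)) * (1 - q ^ k i)))"
    by (rule ext) (simp add: gch_def Fz_def)
  show ?thesis using hs unfolding gg stmt .
qed

end
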